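(* For every natural number $N$ and every prime number $p$, there exists an integer $m \ge 1$ such that for every $l \in \mathbb{N}$, $$P_{T(2,2lm+1)}(a,N) \equiv a^{2lm} \pmod p \quad\text{and}\quad P_{T(2,-2lm-1)}(a,N) \equiv a^{-2lm} \pmod p.$$
   Context: $P_K(a,z)$ denotes the HOMFLY polynomial of a link $K$, normalised so that the trivial knot has $P=1$ and satisfying $a^{-1} P_{\widehat{\beta \sigma_i^2}} - a P_{\widehat{\beta}} = z P_{\widehat{\beta\sigma_i}}$ for all braids $\beta\in B_n$ and generators $\sigma_i$, where the hat denotes braid closure. For an integer $n$, $T(2,n)$ denotes the torus link obtained as the closure of the braid $\sigma_1^n \in B_2$; for $n$ odd it is a knot, and $T(2,-n)$ is the mirror image of $T(2,n)$. Congruence modulo $p$ of Laurent polynomials means congruence of all coefficients. *)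

theory Defs
  imports "HOL-Computational_Algebra.Formal_Laurent_Series" "HOL-Number_Theory.Cong"
begin

text \<open>Two-variable Laurent polynomials: outer variable a, coefficients are
Laurent polynomials in z (type int fls).\<close>

type_synonym lp2 = "int fls fls"

definition var_a :: lp2 where "var_a = fls_X"
definition var_a_inv :: lp2 where "var_a_inv = fls_X_inv"
definition var_z :: lp2 where "var_z = fls_const fls_X"
definition var_z_inv :: lp2 where "var_z_inv = fls_const fls_X_inv"

text \<open>HOMFLY polynomial of the closure of sigma_1^n in B_2, determined by the
skein relation a^{-1} P_{n+2} - a P_n = z P_{n+1} together with
P_{1} = P_{-1} = 1 (both closures are the trivial knot).
hp k = P_{k-1} (upward), hn k = P_{1-k} (downward).\<close>

definition homfly_unlink2 :: lp2 where
  "homfly_unlink2 = (var_a_inv - var_a) * var_z_inv"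

fun hp :: "nat \<Rightarrow> lp2" where
  "hp 0 = 1"
| "hp (Suc 0) = homfly_unlink2"
| "hp (Suc (Suc k)) = var_a ^ 2 * hp k + var_a * var_z * hp (Suc k)"

fun hn :: "nat \<Rightarrow> lp2" where
  "hn 0 = 1"
| "hn (Suc 0) = homfly_unlink2"
| "hn (Suc (Suc k)) = var_a_inv ^ 2 * hn k - var_a_inv * var_z * hn (Suc k)"

definition homfly_T2 :: "int \<Rightarrow> lp2" where
  "homfly_T2 n = (if n \<ge> -1 then hp (nat (n + 1)) else hn (nat (1 - n)))"

text \<open>Substitution z := N in a Laurent polynomial in z (used only where no
negative powers of z occur).\<close>
definition eval_z :: "nat \<Rightarrow> int fls \<Rightarrow> int" where
  "eval_z N c = (\<Sum>j \<in> {j. fls_nth c j \<noteq> 0}. fls_nth c j * int N ^ nat j)"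

definition homfly_T2_at :: "nat \<Rightarrow> int \<Rightarrow> int \<Rightarrow> int" where
  "homfly_T2_at N n k = eval_z N (fls_nth (homfly_T2 n) k)"

end

theory Submission
  imports Defs "HOL-Computational_Algebra.Polynomial_FPS"
begin

lemma XXi: "(fls_X::'a::comm_ring_1 fls) * fls_X_inv = 1"
  by (intro fls_eqI) (simp add: fls_X_inv_times_conv_shift)

lemma hp2: "hp 2 = 1"
proof -
  have "hp 2 = var_a^2 + var_a * var_z * ((var_a_inv - var_a) * var_z_inv)"
    by (simp add: numeral_2_eq_2 homfly_unlink2_def)
  also have "var_z * var_z_inv = 1" by (simp add: var_z_def var_z_inv_def XXi)
  hence "var_a * var_z * ((var_a_inv - var_a) * var_z_inv) = var_a * (var_a_inv - var_a)"
    by (metis mult.assoc mult.commute mult_1_right)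
  also have "var_a * var_a_inv = 1" by (simp add: var_a_def var_a_inv_def XXi)
  ultimately show ?thesis by (simp add: algebra_simps power2_eq_square)
qed

lemma hn2: "hn 2 = 1"
proof -
  have "hn 2 = var_a_inv^2 - var_a_inv * var_z * ((var_a_inv - var_a) * var_z_inv)"
    by (simp add: numeral_2_eq_2 homfly_unlink2_def)
  also have "var_z * var_z_inv = 1" by (simp add: var_z_def var_z_inv_def XXi)
  hence "var_a_inv * var_z * ((var_a_inv - var_a) * var_z_inv) = var_a_inv * (var_a_inv - var_a)"
    by (metis mult.assoc mult.commute mult_1_right)
  also have "var_a * var_a_inv = 1" by (simp add: var_a_def var_a_inv_def XXi)
  ultimately show ?thesis by (simp add: algebra_simps power2_eq_square)
qed

lemma zc: "var_z^2 = fls_const (fls_X^2)" by (simp add: var_z_def fls_const_power)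

lemma hp_rec: "hp (2*j+4) = var_a^2 * (fls_const (2 + fls_X^2) * hp (2*j+2)) - var_a^4 * hp (2*j)"
proof -
  have s1: "Suc (2*j) = 2*j+1" and s2: "Suc (Suc (2*j)) = 2*j+2" "Suc (2*j+1) = 2*j+2"
    and s3: "Suc (Suc (2*j+1)) = 2*j+3" "Suc (2*j+2) = 2*j+3" and s4: "Suc (Suc (2*j+2)) = 2*j+4" "Suc (2*j+3) = 2*j+4" by simp_all
  have h2: "hp (2*j+2) = var_a^2 * hp (2*j) + var_a * var_z * hp (2*j+1)"
    using hp.simps(3)[of "2*j"] by (simp only: s1 s2)
  have h3: "hp (2*j+3) = var_a^2 * hp (2*j+1) + var_a * var_z * hp (2*j+2)"
    using hp.simps(3)[of "2*j+1"] by (simp only: s2 s3)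
  have h4: "hp (2*j+4) = var_a^2 * hp (2*j+2) + var_a * var_z * hp (2*j+3)"
    using hp.simps(3)[of "2*j+2"] by (simp only: s3 s4)
  have c: "fls_const (2 + fls_X^2) = (2 + var_z^2 :: lp2)"
    by (simp add: zc fls_plus_const[symmetric])
  define x where "x = var_a"
  define z where "z = var_z"
  define H0 where "H0 = hp (2*j)"
  define H1 where "H1 = hp (2*j+1)"
  define H2 where "H2 = hp (2*j+2)"
  define H3 where "H3 = hp (2*j+3)"
  have g2: "x * z * H1 = (H2 - x^2 * H0)" using h2 unfolding x_def z_def H0_def H1_def H2_def by simp
  have "hp (2*j+4) = x^2 * H2 + x * z * (x^2 * H1 + x * z * H2)"
    using h4 h3 unfolding x_def z_def H1_def H2_def H3_def by simp
  also have "\<dots> = x^2 * H2 + x^2 * (x * z * H1) + x^2 * z^2 * H2"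
    by (simp add: algebra_simps power2_eq_square)
  also have "\<dots> = x^2 * ((2 + z^2) * H2) - x^2 * x^2 * H0"
    unfolding g2 by (simp add: algebra_simps power2_eq_square)
  finally show ?thesis unfolding c x_def z_def H0_def H2_def
    by (simp add: power2_eq_square power4_eq_xxxx mult.assoc)
qed

lemma hn_rec: "hn (2*j+4) = var_a_inv^2 * (fls_const (2 + fls_X^2) * hn (2*j+2)) - var_a_inv^4 * hn (2*j)"
proof -
  have s1: "Suc (2*j) = 2*j+1" and s2: "Suc (Suc (2*j)) = 2*j+2" "Suc (2*j+1) = 2*j+2"
    and s3: "Suc (Suc (2*j+1)) = 2*j+3" "Suc (2*j+2) = 2*j+3" and s4: "Suc (Suc (2*j+2)) = 2*j+4" "Suc (2*j+3) = 2*j+4" by simp_all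
  have h2: "hn (2*j+2) = var_a_inv^2 * hn (2*j) - var_a_inv * var_z * hn (2*j+1)"
    using hn.simps(3)[of "2*j"] by (simp only: s1 s2)
  have h3: "hn (2*j+3) = var_a_inv^2 * hn (2*j+1) - var_a_inv * var_z * hn (2*j+2)"
    using hn.simps(3)[of "2*j+1"] by (simp only: s2 s3)
  have h4: "hn (2*j+4) = var_a_inv^2 * hn (2*j+2) - var_a_inv * var_z * hn (2*j+3)"
    using hn.simps(3)[of "2*j+2"] by (simp only: s3 s4)
  have c: "fls_const (2 + fls_X^2) = (2 + var_z^2 :: lp2)"
    by (simp add: zc fls_plus_const[symmetric])
  define x where "x = var_a_inv"
  define z where "z = var_z"
  define H0 where "H0 = hn (2*j)"
  define H1 where "H1 = hn (2*j+1)"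
  define H2 where "H2 = hn (2*j+2)"
  define H3 where "H3 = hn (2*j+3)"
  have g2: "x * z * H1 = -(H2 - x^2 * H0)" using h2 unfolding x_def z_def H0_def H1_def H2_def by simp
  have "hn (2*j+4) = x^2 * H2 - x * z * (x^2 * H1 - x * z * H2)"
    using h4 h3 unfolding x_def z_def H1_def H2_def H3_def by simp
  also have "\<dots> = x^2 * H2 - x^2 * (x * z * H1) + x^2 * z^2 * H2"
    by (simp add: algebra_simps power2_eq_square)
  also have "\<dots> = x^2 * ((2 + z^2) * H2) - x^2 * x^2 * H0"
    unfolding g2 by (simp add: algebra_simps power2_eq_square)
  finally show ?thesis unfolding c x_def z_def H0_def H2_def
    by (simp add: power2_eq_square power4_eq_xxxx mult.assoc)
qed

unbundle fps_syntax

definition ff :: "int poly \<Rightarrow> int fls" where "ff q = fps_to_fls (fps_of_poly q)"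

lemma ff_simps: "ff (p + q) = ff p + ff q" "ff (p - q) = ff p - ff q" "ff (p * q) = ff p * ff q"
  "ff 0 = 0" "ff 1 = 1" "ff [:0,1:] = fls_X" "ff 2 = 2"
  by (simp_all add: ff_def fps_of_poly_add fps_of_poly_diff fps_of_poly_mult fls_times_fps_to_fls)

fun PA :: "nat \<Rightarrow> int poly" and PB :: "nat \<Rightarrow> int poly" where
  "PA 0 = 1" | "PA (Suc 0) = 0" | "PA (Suc (Suc j)) = (2 + [:0,1:]^2) * PA (Suc j) - PA j"
| "PB 0 = 0" | "PB (Suc 0) = 1" | "PB (Suc (Suc j)) = (2 + [:0,1:]^2) * PB (Suc j) - PB j"

lemma ffc: "ff (2 + [:0,1:]^2) = 2 + fls_X^2"
  by (simp only: power2_eq_square ff_simps)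

lemma ffX2: "ff ([:0,1:]^2) = fls_X^2"
  by (simp only: power2_eq_square ff_simps)

lemma nth_a2: "(var_a^n * G) $$ k = G $$ (k - int n)"
  by (simp add: var_a_def fls_X_power_times_conv_shift)
lemma nth_ai2: "(var_a_inv^n * G) $$ k = G $$ (k + int n)"
  by (simp add: var_a_inv_def fls_X_inv_power_times_conv_shift)

lemma hp_coeff: "hp (2*j) $$ k = (if k = 2*int j then ff (PA j) else if k = 2*int j - 2 then ff (PB j) else 0)"
proof (induction j arbitrary: k rule: nat_less_induct)
  case (1 j)
  show ?case
  proof (cases j)
    case 0 then show ?thesis by (simp add: ff_simps)
  next
    case (Suc i) note j = this
    show ?thesis
    proof (cases i)
      case 0 then show ?thesis using j hp2 by (simp add: ff_simps)
    next
      case (Suc i')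
      have r: "hp (2*j) = var_a^2 * (fls_const (2 + fls_X^2) * hp (2*i'+2)) - var_a^4 * hp (2*i')"
        proof -
          have e: "2*j = 2*i'+4" using j Suc by simp
          show ?thesis unfolding e by (rule hp_rec)
        qed
      have i1: "hp (2*i'+2) $$ (k-2) = (if k = 2*int j then ff (PA (Suc i')) else if k = 2*int j - 2 then ff (PB (Suc i')) else 0)"
        using "1"[rule_format, of "Suc i'" "k-2"] j Suc by (auto simp: algebra_simps)
      have i2: "hp (2*i') $$ (k-4) = (if k = 2*int j then ff (PA i') else if k = 2*int j - 2 then ff (PB i') else 0)"
        using "1"[rule_format, of "i'" "k-4"] j Suc by (auto simp: algebra_simps)
      have "hp (2*j) $$ k = (2 + fls_X^2) * hp (2*i'+2) $$ (k-2) - hp (2*i') $$ (k-4)"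
        unfolding r by (simp add: nth_a2)
      also have "\<dots> = (if k = 2*int j then ff (PA j) else if k = 2*int j - 2 then ff (PB j) else 0)"
        unfolding i1 i2 using j Suc by (simp add: ff_simps ffc ffX2)
      finally show ?thesis .
    qed
  qed
qed

lemma hn_coeff: "hn (2*j) $$ k = (if k = - 2*int j then ff (PA j) else if k = - 2*int j + 2 then ff (PB j) else 0)"
proof (induction j arbitrary: k rule: nat_less_induct)
  case (1 j)
  show ?case
  proof (cases j)
    case 0 then show ?thesis by (simp add: ff_simps)
  next
    case (Suc i) note j = this
    show ?thesis
    proof (cases i)
      case 0 then show ?thesis using j hn2 by (simp add: ff_simps)
    next
      case (Suc i')
      have r: "hn (2*j) = var_a_inv^2 * (fls_const (2 + fls_X^2) * hn (2*i'+2)) - var_a_inv^4 * hn (2*i')"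
        proof -
          have e: "2*j = 2*i'+4" using j Suc by simp
          show ?thesis unfolding e by (rule hn_rec)
        qed
      have i1: "hn (2*i'+2) $$ (k+2) = (if k = - 2*int j then ff (PA (Suc i')) else if k = - 2*int j + 2 then ff (PB (Suc i')) else 0)"
        using "1"[rule_format, of "Suc i'" "k+2"] j Suc by (auto simp: algebra_simps)
      have i2: "hn (2*i') $$ (k+4) = (if k = - 2*int j then ff (PA i') else if k = - 2*int j + 2 then ff (PB i') else 0)"
        using "1"[rule_format, of "i'" "k+4"] j Suc by (auto simp: algebra_simps)
      have "hn (2*j) $$ k = (2 + fls_X^2) * hn (2*i'+2) $$ (k+2) - hn (2*i') $$ (k+4)"
        unfolding r by (simp add: nth_ai2)
      also have "\<dots> = (if k = - 2*int j then ff (PA j) else if k = - 2*int j + 2 then ff (PB j) else 0)"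
        unfolding i1 i2 using j Suc by (simp add: ff_simps ffc ffX2)
      finally show ?thesis .
    qed
  qed
qed

lemma ff_nth_int: "ff q $$ int n = coeff q n"
  by (simp add: ff_def)

lemma ff_nth_neg: "j < 0 \<Longrightarrow> ff q $$ j = 0"
  by (simp add: ff_def)

lemma eval_ff: "eval_z N (ff q) = poly q (int N)"
proof -
  let ?S = "{i. coeff q i \<noteq> 0}"
  have fin: "finite ?S"
    by (rule finite_subset[of _ "{..degree q}"]) (auto intro: le_degree)
  have sup: "{j. ff q $$ j \<noteq> 0} = int ` ?S"
  proof (rule set_eqI)
    fix j :: int
    show "j \<in> {j. ff q $$ j \<noteq> 0} \<longleftrightarrow> j \<in> int ` ?S"
    proof (cases "j < 0")
      case True thus ?thesis by (auto simp: ff_nth_neg)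
    next
      case False
      then obtain n where n: "j = int n" using nonneg_int_cases by (metis linorder_not_less)
      have "int n \<in> int ` ?S \<longleftrightarrow> n \<in> ?S" by (rule inj_image_mem_iff) simp
      thus ?thesis unfolding n by (simp add: ff_nth_int)
    qed
  qed
  have "eval_z N (ff q) = (\<Sum>j\<in>int ` ?S. ff q $$ j * int N ^ nat j)"
    by (simp add: eval_z_def sup)
  also have "\<dots> = (\<Sum>i\<in>?S. coeff q i * int N ^ i)"
    by (subst sum.reindex) (simp_all add: ff_nth_int)
  also have "\<dots> = (\<Sum>i\<le>degree q. coeff q i * int N ^ i)"
    by (rule sum.mono_neutral_left) (auto intro: le_degree)
  also have "\<dots> = poly q (int N)" by (simp add: poly_altdef)
  finally show ?thesis .
qed

lemma eval0: "eval_z N 0 = 0" by (simp add: eval_z_def)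

lemma md: "(c*a - b) mod (P::int) = (c*(a mod P) - b mod P) mod P"
proof -
  have "(c*(a mod P) - b mod P) mod P = ((c*(a mod P)) mod P - (b mod P) mod P) mod P"
    by (rule mod_diff_eq[symmetric])
  also have "\<dots> = ((c*a) mod P - b mod P) mod P" by (simp add: mod_mult_right_eq)
  also have "\<dots> = (c*a - b) mod P" by (rule mod_diff_eq)
  finally show ?thesis ..
qed

lemma modstep:
  fixes f :: "nat \<Rightarrow> int"
  assumes rec: "\<And>j. f (Suc (Suc j)) = c * f (Suc j) - f j"
  shows "f i mod P = f i' mod P \<Longrightarrow> f (Suc i) mod P = f (Suc i') mod P \<Longrightarrow>
           f (Suc (Suc i)) mod P = f (Suc (Suc i')) mod P"
    and "f (Suc i) mod P = f (Suc i') mod P \<Longrightarrow> f (Suc (Suc i)) mod P = f (Suc (Suc i')) mod P \<Longrightarrow>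
           f i mod P = f i' mod P"
proof -
  assume a: "f i mod P = f i' mod P" "f (Suc i) mod P = f (Suc i') mod P"
  have "f (Suc (Suc i)) mod P = (c * (f (Suc i) mod P) - f i mod P) mod P"
    unfolding rec by (rule md)
  also have "\<dots> = (c * (f (Suc i') mod P) - f i' mod P) mod P" using a by simp
  also have "\<dots> = f (Suc (Suc i')) mod P"
    unfolding rec by (rule md[symmetric])
  finally show "f (Suc (Suc i)) mod P = f (Suc (Suc i')) mod P" .
next
  assume a: "f (Suc i) mod P = f (Suc i') mod P" "f (Suc (Suc i)) mod P = f (Suc (Suc i')) mod P"
  have e: "\<And>t. f t = c * f (Suc t) - f (Suc (Suc t))" using rec by simp
  have "f i mod P = (c * (f (Suc i) mod P) - f (Suc (Suc i)) mod P) mod P"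
    by (subst e) (rule md)
  also have "\<dots> = (c * (f (Suc i') mod P) - f (Suc (Suc i')) mod P) mod P" using a by simp
  also have "\<dots> = f i' mod P"
    by (subst (2) e) (rule md[symmetric])
  finally show "f i mod P = f i' mod P" .
qed

definition al :: "nat \<Rightarrow> nat \<Rightarrow> int" where "al N j = poly (PA j) (int N)"
definition be :: "nat \<Rightarrow> nat \<Rightarrow> int" where "be N j = poly (PB j) (int N)"

lemma al_rec: "al N (Suc (Suc j)) = (2 + int N^2) * al N (Suc j) - al N j"
  by (simp add: al_def power2_eq_square)
lemma be_rec: "be N (Suc (Suc j)) = (2 + int N^2) * be N (Suc j) - be N j"
  by (simp add: be_def power2_eq_square)

definition St :: "nat \<Rightarrow> int \<Rightarrow> nat \<Rightarrow> int \<times> int \<times> int \<times> int" where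
  "St N P j = (al N j mod P, al N (Suc j) mod P, be N j mod P, be N (Suc j) mod P)"

lemma St_fwd:
  assumes "St N P i = St N P i'" shows "St N P (Suc i) = St N P (Suc i')"
proof -
  from assms have a: "al N i mod P = al N i' mod P" "al N (Suc i) mod P = al N (Suc i') mod P"
    "be N i mod P = be N i' mod P" "be N (Suc i) mod P = be N (Suc i') mod P"
    by (simp_all add: St_def)
  have x: "al N (Suc (Suc i)) mod P = al N (Suc (Suc i')) mod P"
    by (rule modstep(1)[of "al N", OF al_rec a(1) a(2)])
  have y: "be N (Suc (Suc i)) mod P = be N (Suc (Suc i')) mod P"
    by (rule modstep(1)[of "be N", OF be_rec a(3) a(4)])
  show ?thesis unfolding St_def using a x y by simp
qed

lemma St_bwd:
  assumes "St N P (Suc i) = St N P (Suc i')" shows "St N P i = St N P i'"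
proof -
  from assms have a: "al N (Suc i) mod P = al N (Suc i') mod P" "al N (Suc (Suc i)) mod P = al N (Suc (Suc i')) mod P"
    "be N (Suc i) mod P = be N (Suc i') mod P" "be N (Suc (Suc i)) mod P = be N (Suc (Suc i')) mod P"
    by (simp_all add: St_def)
  have x: "al N i mod P = al N i' mod P"
    by (rule modstep(2)[of "al N", OF al_rec a(1) a(2)])
  have y: "be N i mod P = be N i' mod P"
    by (rule modstep(2)[of "be N", OF be_rec a(3) a(4)])
  show ?thesis unfolding St_def using a x y by simp
qed

lemma St_back0: "St N P (i + d) = St N P i \<Longrightarrow> St N P d = St N P 0"
proof (induction i)
  case 0 thus ?case by simp
next
  case (Suc i)
  have "St N P (Suc (i + d)) = St N P (Suc i)" using Suc.prems by simp
  hence "St N P (i + d) = St N P i" by (rule St_bwd)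
  thus ?case by (rule Suc.IH)
qed

lemma St_fwd_all: "St N P d = St N P 0 \<Longrightarrow> St N P (j + d) = St N P j"
proof (induction j)
  case 0 thus ?case by simp
next
  case (Suc j)
  have "St N P (Suc (j + d)) = St N P (Suc j)" by (rule St_fwd[OF Suc.IH[OF Suc.prems]])
  thus ?case by simp
qed

lemma St_mult: "St N P d = St N P 0 \<Longrightarrow> St N P (l * d) = St N P 0"
proof (induction l)
  case (Suc l)
  then show ?case using St_fwd_all[OF Suc.prems, of "l*d"] by (simp add: add.commute)
qed simp

lemma St_period:
  assumes "P > 0"
  shows "\<exists>d\<ge>1. St N P d = St N P 0"
proof -
  have "range (St N P) \<subseteq> {0..<P} \<times> {0..<P} \<times> {0..<P} \<times> {0..<P}"
    using assms by (auto simp: St_def)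
  hence "finite (range (St N P))" by (rule finite_subset) (intro finite_cartesian_product finite_atLeastLessThan_int)
  hence "\<not> inj (St N P)" using finite_imageD[of "St N P" UNIV] infinite_UNIV_nat by auto
  then obtain i i' where ii: "i \<noteq> i'" "St N P i = St N P i'" by (auto simp: inj_def)
  show ?thesis
  proof (cases "i < i'")
    case True
    then have "St N P (i + (i' - i)) = St N P i" using ii by simp
    then have "St N P (i' - i) = St N P 0" by (rule St_back0)
    then show ?thesis using True by (intro exI[of _ "i' - i"]) simp
  next
    case False
    then have "St N P (i' + (i - i')) = St N P i'" using ii by simp
    then have "St N P (i - i') = St N P 0" by (rule St_back0)
    then show ?thesis using False ii(1) by (intro exI[of _ "i - i'"]) simp
  qed
qed

theorem mainTheorem4:
  fixes N p :: nat
  assumes "prime p"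
  shows "\<exists>m::nat. m \<ge> 1 \<and> (\<forall>l::nat.
           (\<forall>k::int. [homfly_T2_at N (2 * int l * int m + 1) k
                        = (if k = 2 * int l * int m then 1 else 0)] (mod int p)) \<and>
           (\<forall>k::int. [homfly_T2_at N (- 2 * int l * int m - 1) k
                        = (if k = - 2 * int l * int m then 1 else 0)] (mod int p)))"
proof -
  have P: "int p > 0" using assms prime_gt_0_nat by simp
  obtain m where m: "m \<ge> 1" "St N (int p) m = St N (int p) 0" using St_period[OF P] by blast
  have a1: "al N 1 = 0" and b1: "be N 1 = 1" by (simp_all add: al_def be_def)
  { fix l :: nat
    have "St N (int p) (l * m) = St N (int p) 0" by (rule St_mult[OF m(2)])
    hence A: "al N (Suc (l*m)) mod int p = 0" and B: "be N (Suc (l*m)) mod int p = 1 mod int p"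
      using a1 b1 by (auto simp: St_def)
    have T1: "homfly_T2 (2 * int l * int m + 1) = hp (2 * Suc (l*m))"
    proof -
      have "2 * int l * int m + 1 + 1 = int (2 * Suc (l*m))" by simp
      hence "nat (2 * int l * int m + 1 + 1) = 2 * Suc (l*m)" by (simp only: nat_int)
      thus ?thesis by (simp add: homfly_T2_def)
    qed
    have T2: "homfly_T2 (- 2 * int l * int m - 1) = hn (2 * Suc (l*m))"
    proof (cases "l * m = 0")
      case True
      then have "- 2 * int l * int m - 1 = -1" by simp
      moreover have "2 * Suc (l*m) = 2" using True by simp
      moreover have "homfly_T2 (-1) = 1" by (simp add: homfly_T2_def)
      ultimately show ?thesis by (simp only: hn2)
    next
      case False
      then have "int l \<ge> 1" "int m \<ge> 1" by auto
      then have "int l * int m \<ge> 1" using mult_mono[of 1 "int l" 1 "int m"] by simp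
      then have "\<not> (- 2 * int l * int m - 1 \<ge> -1)" by linarith
      moreover have "nat (1 - (- 2 * int l * int m - 1)) = 2 * Suc (l*m)"
      proof -
        have "1 - (- 2 * int l * int m - 1) = int (2 * Suc (l*m))" by simp
        thus ?thesis by (simp only: nat_int)
      qed
      ultimately show ?thesis by (simp add: homfly_T2_def)
    qed
    have "\<forall>k::int. [homfly_T2_at N (2 * int l * int m + 1) k
                        = (if k = 2 * int l * int m then 1 else 0)] (mod int p)"
    proof
      fix k :: int
      show "[homfly_T2_at N (2 * int l * int m + 1) k
                        = (if k = 2 * int l * int m then 1 else 0)] (mod int p)"
        unfolding homfly_T2_at_def T1 hp_coeff cong_def
        using A B by (auto simp: eval_ff eval0 al_def be_def algebra_simps)
    qed
    moreover have "\<forall>k::int. [homfly_T2_at N (- 2 * int l * int m - 1) k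
                        = (if k = - 2 * int l * int m then 1 else 0)] (mod int p)"
    proof
      fix k :: int
      show "[homfly_T2_at N (- 2 * int l * int m - 1) k
                        = (if k = - 2 * int l * int m then 1 else 0)] (mod int p)"
        unfolding homfly_T2_at_def T2 hn_coeff cong_def
        using A B by (auto simp: eval_ff eval0 al_def be_def algebra_simps)
    qed
    ultimately have "(\<forall>k::int. [homfly_T2_at N (2 * int l * int m + 1) k
                        = (if k = 2 * int l * int m then 1 else 0)] (mod int p)) \<and>
           (\<forall>k::int. [homfly_T2_at N (- 2 * int l * int m - 1) k
                        = (if k = - 2 * int l * int m then 1 else 0)] (mod int p))" ..
  }
  thus ?thesis using m(1) by blast
qed

end
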